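(* Let $\lambda<\kappa$ be infinite cardinals with $\kappa$ regular and $2^\lambda=2^\kappa$. Then for every $A\subseteq\kappa^\kappa$ there is a closed set $C\subseteq\kappa^\kappa\times2^\kappa$ such that $A=\{f\in\kappa^\kappa\mid\exists g\in2^\kappa\,((f,g)\in C)\}$.
   Context: $\kappa^\kappa$ and $2^\kappa$ carry the usual (bounded) topology generated by the sets $\{\zeta\mid\eta\subseteq\zeta\}$ for $\eta$ a function with domain some ordinal $\alpha<\kappa$ (into $\kappa$, resp. $\{0,1\}$); $\kappa^\kappa\times2^\kappa$ carries the product topology, and "closed" refers to this topology. *)

theory Defs
  imports "HOL-Analysis.Analysis"
begin

text \<open>The cardinal kappa is represented by a cardinal (initial-ordinal) well-order r
  on the universe of a type 'k; the ordinals below kappa are the elements of 'k,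
  and an ordinal alpha < kappa is the strict initial segment underS r a.\<close>

definition bounded_topology :: "'k rel \<Rightarrow> ('k \<Rightarrow> 'b) topology" where
  "bounded_topology r = topology_generated_by
     {{\<zeta>. \<forall>x \<in> underS r a. \<zeta> x = \<eta> x} | a \<eta>. a \<in> Field r}"

end

theory Submission
  imports Defs
begin

theorem lemma2p1:
  fixes r :: "'k rel" and L :: "'l set" and A :: "('k \<Rightarrow> 'k) set"
  assumes "Card_order r" and "Field r = UNIV" and "infinite (UNIV :: 'k set)"
    and "regularCard r"
    and "infinite L" and "(card_of L, r) \<in> ordLess"
    and "(card_of (Pow L), card_of (Pow (UNIV :: 'k set))) \<in> ordIso"
  shows "\<exists>C :: (('k \<Rightarrow> 'k) \<times> ('k \<Rightarrow> bool)) set.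
           closedin (prod_topology (bounded_topology r) (bounded_topology r)) C \<and>
           A = {f. \<exists>g. (f, g) \<in> C}"
proof -
  have WO: "Well_order r" using assms(1) card_order_on_well_order_on by blast
  obtain a where "a \<in> Field r" and a: "(card_of L, Restr r (underS r a)) \<in> ordIso"
    using ordLess_iff_ordIso_Restr[OF WO card_of_Well_order] assms(6) by blast
  define U where "U = underS r a"
  have FU: "Field (Restr r U) = U"
    by (rule Refl_Field_Restr2) (use WO in \<open>auto simp: U_def order_on_defs underS_def Field_def\<close>)
  obtain h where "bij_betw h L U"
    using a unfolding ordIso_def iso_def U_def[symmetric] by (auto simp: FU Field_card_of)
  then have bLU: "bij_betw (image h) (Pow L) (Pow U)" by (rule bij_betw_Pow)
  obtain p where bPL: "bij_betw p (Pow (UNIV::'k set)) (Pow L)"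
    using assms(7) card_of_ordIso ordIso_symmetric by blast
  obtain q where bKK: "bij_betw q (UNIV \<times> UNIV :: ('k \<times> 'k) set) (UNIV :: 'k set)"
    using card_of_Times_same_infinite[OF assms(3)] card_of_ordIso by blast
  define e where "e f = image h (p (q ` {(x, f x) | x. True}))" for f :: "'k \<Rightarrow> 'k"
  have einj: "inj e"
  proof
    fix f1 f2 :: "'k \<Rightarrow> 'k" assume "e f1 = e f2"
    then have "p (q ` {(x, f1 x) | x. True}) = p (q ` {(x, f2 x) | x. True})"
    proof -
      have "p S \<in> Pow L" for S using bPL unfolding bij_betw_def by auto
      moreover have "inj_on (image h) (Pow L)" using bLU by (simp add: bij_betw_def)
      ultimately show ?thesis using \<open>e f1 = e f2\<close> unfolding e_def by (meson inj_onD)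
    qed
    then have "q ` {(x, f1 x) | x. True} = q ` {(x, f2 x) | x. True}"
      using bPL unfolding bij_betw_def inj_on_def by auto
    then have "{(x, f1 x) | x. True} = {(x, f2 x) | x. True}"
    proof -
      have "inj q" using bKK by (simp add: bij_betw_def)
      then show ?thesis using \<open>q ` {(x, f1 x) | x. True} = q ` {(x, f2 x) | x. True}\<close> by (simp add: inj_image_eq_iff)
    qed
    then show "f1 = f2" by (auto simp: fun_eq_iff)
  qed
  have eU: "e f \<subseteq> U" for f
  proof -
    have "p S \<in> Pow L" for S using bPL unfolding bij_betw_def by auto
    then show ?thesis using bLU unfolding e_def bij_betw_def by blast
  qed
  define C where "C = {(f, g). f \<in> A \<and> (\<forall>x\<in>U. g x = (x \<in> e f))}"
  have top1: "topspace (bounded_topology r :: ('k \<Rightarrow> 'k) topology) = UNIV"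
    unfolding bounded_topology_def topology_generated_by_topspace
    using \<open>a \<in> Field r\<close> by blast
  have top2: "topspace (bounded_topology r :: ('k \<Rightarrow> bool) topology) = UNIV"
    unfolding bounded_topology_def topology_generated_by_topspace
    using \<open>a \<in> Field r\<close> by blast
  have bopen1: "openin (bounded_topology r) {\<zeta>. \<forall>x \<in> underS r b. \<zeta> x = \<eta> x}" for b and \<eta> :: "'k \<Rightarrow> 'k"
    unfolding bounded_topology_def
    by (rule topology_generated_by_Basis) (use assms(2) in auto)
  have bopen2: "openin (bounded_topology r) {\<zeta>. \<forall>x \<in> underS r b. \<zeta> x = \<eta> x}" for b and \<eta> :: "'k \<Rightarrow> bool"
    unfolding bounded_topology_def
    by (rule topology_generated_by_Basis) (use assms(2) in auto)
  have proj: "A = {f. \<exists>g. (f, g) \<in> C}"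
    unfolding C_def by auto
  have "openin (prod_topology (bounded_topology r) (bounded_topology r)) (- C)"
  proof (subst openin_subopen, intro ballI)
    fix z assume "z \<in> - C"
    obtain f g where z: "z = (f, g)" by fastforce
    show "\<exists>T. openin (prod_topology (bounded_topology r) (bounded_topology r)) T \<and> z \<in> T \<and> T \<subseteq> - C"
    proof (cases "\<exists>f'\<in>A. \<forall>x\<in>U. g x = (x \<in> e f')")
      case True
      then obtain f' where f': "f' \<in> A" "\<forall>x\<in>U. g x = (x \<in> e f')" by blast
      have "f' \<noteq> f" using \<open>z \<in> - C\<close> f' z C_def by auto
      then obtain \<alpha> where al: "f \<alpha> \<noteq> f' \<alpha>" by (metis ext)
      obtain b where "\<alpha> \<noteq> b" "(\<alpha>, b) \<in> r"
        using infinite_Card_order_limit[OF assms(1)] assms(2,3) by auto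
      then have alb: "\<alpha> \<in> underS r b" by (simp add: underS_def)
      define T where "T = {\<zeta>. \<forall>x \<in> underS r b. \<zeta> x = f x} \<times> {\<zeta>. \<forall>x \<in> U. \<zeta> x = g x}"
      have "openin (prod_topology (bounded_topology r) (bounded_topology r)) T"
        unfolding T_def U_def openin_prod_Times_iff using bopen1 bopen2 by blast
      moreover have "z \<in> T" using z T_def by auto
      moreover have "T \<subseteq> - C"
      proof
        fix w assume "w \<in> T"
        obtain f'' g'' where w: "w = (f'', g'')" by fastforce
        show "w \<in> - C"
        proof
          assume "w \<in> C"
          then have "f'' \<in> A" "\<forall>x\<in>U. g'' x = (x \<in> e f'')" using w C_def by auto
          moreover have "\<forall>x\<in>U. g'' x = g x" "f'' \<alpha> = f \<alpha>" using \<open>w \<in> T\<close> w T_def alb by auto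
          ultimately have "\<forall>x\<in>U. (x \<in> e f'') = (x \<in> e f')" using f' by auto
          then have "e f'' = e f'" using eU by blast
          then have "f'' = f'" using einj by (simp add: inj_eq)
          then show False using al \<open>f'' \<alpha> = f \<alpha>\<close> by simp
        qed
      qed
      ultimately show ?thesis by blast
    next
      case False
      define T where "T = (UNIV :: ('k \<Rightarrow> 'k) set) \<times> {\<zeta>. \<forall>x \<in> U. \<zeta> x = g x}"
      have "openin (prod_topology (bounded_topology r) (bounded_topology r)) T"
        unfolding T_def U_def openin_prod_Times_iff using bopen2 top1
        by (metis openin_topspace)
      moreover have "z \<in> T" using z T_def by auto
      moreover have "T \<subseteq> - C" using False unfolding T_def C_def by auto
      ultimately show ?thesis by blast
    qed
  qed
  then have "closedin (prod_topology (bounded_topology r) (bounded_topology r)) C"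
    unfolding closedin_def topspace_prod_topology top1 top2 by (simp add: Compl_eq_Diff_UNIV)
  with proj show ?thesis by blast
qed

end
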